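(* Let $d$ be an odd integer. Then $U=\{(0,0)\}\cup\{(e,f)\in\mathcal{B}\mid f=d\}$ is avoidable.
   Context: The bicyclic inverse semigroup is $\mathcal{B}=\{(a,b)\in\mathbb{Z}\times\mathbb{Z}\mid a\ge 0,\ a+b\ge 0\}$ with multiplication $(a,b)(c,d)=(\max\{c+d,a\}-d,\ b+d)$. A subset $U\subseteq\mathcal{B}$ is called avoidable if $\mathcal{B}$ can be partitioned into two subsets $A$ and $B$ such that no element of $U$ can be written as a product $xy$ of two distinct elements $x\neq y$ both in $A$, or both in $B$. *)

theory Defs
  imports Main
begin

definition bicyclic :: "(int \<times> int) set" where
  "bicyclic = {(a, b). a \<ge> 0 \<and> a + b \<ge> 0}"

fun bmult :: "int \<times> int \<Rightarrow> int \<times> int \<Rightarrow> int \<times> int" where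
  "bmult (a, b) (c, d) = (max (c + d) a - d, b + d)"

definition avoidable :: "(int \<times> int) set \<Rightarrow> bool" where
  "avoidable U \<longleftrightarrow> U \<subseteq> bicyclic \<and>
     (\<exists>A B. A \<union> B = bicyclic \<and> A \<inter> B = {} \<and>
        (\<forall>x\<in>A. \<forall>y\<in>A. x \<noteq> y \<longrightarrow> bmult x y \<notin> U) \<and>
        (\<forall>x\<in>B. \<forall>y\<in>B. x \<noteq> y \<longrightarrow> bmult x y \<notin> U))"

end

theory Submission
  imports Defs
begin

definition colp :: "int \<Rightarrow> int \<Rightarrow> bool" where
  "colp e b = (if e dvd b then b > 0 else 2 * (b mod e) < e)"

lemma colp_neg:
  assumes "e > 0" "odd e" "b \<noteq> 0"
  shows "colp e b \<noteq> colp e (-b)"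
proof (cases "e dvd b")
  case True then show ?thesis using assms by (auto simp: colp_def)
next
  case False
  then have m: "b mod e \<noteq> 0" by (simp add: dvd_eq_mod_eq_0)
  have "(-b) mod e = e - b mod e" using m by (simp add: zmod_zminus1_eq_if)
  moreover have "2 * (b mod e) \<noteq> e" using assms(2) by (metis dvd_triv_left)
  ultimately show ?thesis using False by (auto simp: colp_def)
qed

lemma colp_refl:
  assumes "e > 0" "odd e"
  shows "colp e b \<noteq> colp e (e - b)"
proof (cases "e dvd b")
  case True
  then obtain k where k: "b = e * k" by auto
  have ek: "e - b = e * (1 - k)" using k by (simp add: algebra_simps)
  have d2: "e dvd (e - b)" using True by simp
  have "(0 < e * k) \<noteq> (0 < e * (1 - k))" using assms(1)
    by (simp add: zero_less_mult_iff) arith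
  then show ?thesis using True d2 k ek unfolding colp_def by simp
next
  case False
  then have m: "b mod e \<noteq> 0" by (simp add: dvd_eq_mod_eq_0)
  have nd: "\<not> e dvd (e - b)" using False dvd_diff[of e e "e-b"] by auto
  have "(e - b) mod e = (-b) mod e" using mod_add_self1[of e "-b"] by simp
  also have "\<dots> = e - b mod e" using m by (simp add: zmod_zminus1_eq_if)
  finally have r: "(e - b) mod e = e - b mod e" .
  have "2 * (b mod e) \<noteq> e" using assms(2) by (metis dvd_triv_left)
  then have "(2 * (b mod e) < e) \<noteq> (2 * (e - b mod e) < e)" by auto
  then show ?thesis using False nd r unfolding colp_def by simp
qed

definition col :: "int \<Rightarrow> int \<Rightarrow> bool" where
  "col d b = colp \<bar>d\<bar> (sgn d * b)"

lemma col_props: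
  assumes "odd d"
  shows "col d b \<noteq> col d (d - b)" and "b \<noteq> 0 \<Longrightarrow> col d b \<noteq> col d (-b)"
proof -
  have d0: "d \<noteq> 0" using assms by auto
  have e: "\<bar>d\<bar> > 0" "odd \<bar>d\<bar>" using d0 assms by auto
  have s: "sgn d * (d - b) = \<bar>d\<bar> - sgn d * b"
    by (simp add: algebra_simps abs_sgn)
  show "col d b \<noteq> col d (d - b)"
    unfolding col_def s using colp_refl[OF e] by blast
  assume "b \<noteq> 0"
  then have "sgn d * b \<noteq> 0" using d0 by (simp add: sgn_0_0)
  moreover have "sgn d * (-b) = - (sgn d * b)" by simp
  ultimately show "col d b \<noteq> col d (-b)"
    unfolding col_def using colp_neg[OF e] by metis
qed

theorem proposition6p2:
  fixes d :: int
  assumes "odd d"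
  shows "avoidable ({(0, 0)} \<union> {(e, f) \<in> bicyclic. f = d})"
proof -
  define A where "A = {p \<in> bicyclic. col d (snd p)}"
  define B where "B = {p \<in> bicyclic. \<not> col d (snd p)}"
  have key: "bmult x y \<notin> ({(0, 0)} \<union> {(e, f) \<in> bicyclic. f = d})"
    if "x \<in> bicyclic" "y \<in> bicyclic" "x \<noteq> y" "col d (snd x) = col d (snd y)" for x y
  proof -
    obtain a b where x: "x = (a, b)" by fastforce
    obtain c f where y: "y = (c, f)" by fastforce
    have ab: "a \<ge> 0" "a + b \<ge> 0" "c \<ge> 0" "c + f \<ge> 0"
      using that(1,2) x y by (auto simp: bicyclic_def)
    have 1: "bmult x y \<noteq> (0, 0)"
    proof
      assume h: "bmult x y = (0, 0)"
      then have "b + f = 0" "max (c + f) a - f = 0" using x y by auto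
      then have "c = 0" "a = -b" using ab by auto
      then have "x = (a, -a)" "y = (0, a)" using x y \<open>b + f = 0\<close> by auto
      moreover have "a \<noteq> 0" using that(3) calculation by auto
      ultimately show False using that(4) col_props(2)[OF assms, of a] by auto
    qed
    have 2: "snd (bmult x y) \<noteq> d"
    proof
      assume "snd (bmult x y) = d"
      then have "f = d - b" using x y by auto
      then show False using that(4) col_props(1)[OF assms, of b] x y by auto
    qed
    show ?thesis using 1 2 by auto
  qed
  have h1: "{(0, 0)} \<union> {(e, f) \<in> bicyclic. f = d} \<subseteq> bicyclic"
    by (auto simp: bicyclic_def)
  have h2: "A \<union> B = bicyclic" by (auto simp: A_def B_def)
  have h3: "A \<inter> B = {}" by (auto simp: A_def B_def)
  have h4: "\<forall>x\<in>A. \<forall>y\<in>A. x \<noteq> y \<longrightarrow> bmult x y \<notin> {(0, 0)} \<union> {(e, f) \<in> bicyclic. f = d}"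
    using key by (auto simp: A_def)
  have h5: "\<forall>x\<in>B. \<forall>y\<in>B. x \<noteq> y \<longrightarrow> bmult x y \<notin> {(0, 0)} \<union> {(e, f) \<in> bicyclic. f = d}"
    using key by (auto simp: B_def)
  show ?thesis unfolding avoidable_def using h1 h2 h3 h4 h5 by blast
qed

end
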